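(* For every $i\in\{1,2,3\}$ we have $e_i\bar\Lambda e_i=e_iZ(\bar\Lambda)e_i$.
   Context: Let $k$ be an algebraically closed field of characteristic $2$, let $n\geq 3$ and $c=2^{n-2}$. Let $Q$ be the quiver with vertices $1,2,3$ and arrows $\beta:1\to 2$, $\gamma:2\to 1$, $\delta:2\to 3$, $\eta:3\to 2$, $\kappa:1\to 3$, $\lambda:3\to 1$. Paths are written left to right: $xy$ means first $x$, then $y$; $e_i$ denotes (the image in $\bar\Lambda$ of) the trivial path at vertex $i$. Let $I\subseteq kQ$ be the ideal generated by $\beta\delta-\kappa\lambda\kappa$, $\eta\gamma-\lambda\kappa\lambda$, $\delta\lambda-\gamma\beta\gamma$, $\kappa\eta-\beta\gamma\beta$, $\lambda\beta-(\eta\delta)^{c-1}\eta$, $\gamma\kappa-(\delta\eta)^{c-1}\delta$, $\gamma\beta\delta$, $\delta\eta\gamma$, $\lambda\kappa\eta$. Put $\bar\Lambda=kQ/I$ (Erdmann's algebra $Q(3\mathcal{K})^c$). *)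

theory Defs
  imports "HOL-Computational_Algebra.Polynomial"
begin

datatype arrow = Beta | Gamma | Delta | Eta | Kappa | Lam

fun src :: "arrow \<Rightarrow> nat" where
  "src Beta = 1" | "src Gamma = 2" | "src Delta = 2"
| "src Eta = 3" | "src Kappa = 1" | "src Lam = 3"

fun tgt :: "arrow \<Rightarrow> nat" where
  "tgt Beta = 2" | "tgt Gamma = 1" | "tgt Delta = 3"
| "tgt Eta = 2" | "tgt Kappa = 3" | "tgt Lam = 1"

text \<open>A path is a pair (start vertex, list of arrows), arrows read left to right
  (first arrow first).  The trivial path at i is (i, []).\<close>

type_synonym path = "nat \<times> arrow list"

fun endv :: "nat \<Rightarrow> arrow list \<Rightarrow> nat" where
  "endv i [] = i"
| "endv i (a # as) = endv (tgt a) as"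

fun valid_path :: "nat \<Rightarrow> arrow list \<Rightarrow> bool" where
  "valid_path i [] = (i \<in> {1,2,3})"
| "valid_path i (a # as) = (src a = i \<and> valid_path (tgt a) as)"

type_synonym 'k kq = "path \<Rightarrow> 'k"

definition kQ :: "('k::field) kq set" where
  "kQ = {f. finite {p. f p \<noteq> 0} \<and> (\<forall>i xs. f (i, xs) \<noteq> 0 \<longrightarrow> valid_path i xs)}"

definition kq_add :: "('k::field) kq \<Rightarrow> 'k kq \<Rightarrow> 'k kq" (infixl "\<oplus>\<^sub>Q" 65) where
  "f \<oplus>\<^sub>Q g = (\<lambda>p. f p + g p)"

definition kq_diff :: "('k::field) kq \<Rightarrow> 'k kq \<Rightarrow> 'k kq" (infixl "\<ominus>\<^sub>Q" 65) where
  "f \<ominus>\<^sub>Q g = (\<lambda>p. f p - g p)"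

definition kq_zero :: "('k::field) kq" where
  "kq_zero = (\<lambda>p. 0)"

text \<open>Multiplication: concatenation of paths (zero if not composable),
  extended bilinearly.  A path (i,xs) factors as (i, take n xs)(endv i (take n xs), drop n xs).\<close>

definition kq_mult :: "('k::field) kq \<Rightarrow> 'k kq \<Rightarrow> 'k kq" (infixl "\<otimes>\<^sub>Q" 70) where
  "f \<otimes>\<^sub>Q g = (\<lambda>(i, xs). \<Sum>n\<in>{0..length xs}.
       f (i, take n xs) * g (endv i (take n xs), drop n xs))"

definition pathel :: "path \<Rightarrow> ('k::field) kq" where
  "pathel p = (\<lambda>q. if q = p then 1 else 0)"

definition idem :: "nat \<Rightarrow> ('k::field) kq" where
  "idem i = pathel (i, [])"

definition word :: "arrow list \<Rightarrow> ('k::field) kq" where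
  "word xs = pathel (src (hd xs), xs)"

inductive_set gen_ideal :: "('k::field) kq set \<Rightarrow> 'k kq set" for R where
  zero: "kq_zero \<in> gen_ideal R"
| gen: "r \<in> R \<Longrightarrow> a \<in> kQ \<Longrightarrow> b \<in> kQ \<Longrightarrow> a \<otimes>\<^sub>Q r \<otimes>\<^sub>Q b \<in> gen_ideal R"
| add: "x \<in> gen_ideal R \<Longrightarrow> y \<in> gen_ideal R \<Longrightarrow> x \<oplus>\<^sub>Q y \<in> gen_ideal R"

text \<open>The relations of Erdmann's algebra Q(3K)^c.\<close>

definition relations :: "nat \<Rightarrow> ('k::field) kq set" where
  "relations c = {
     word [Beta, Delta] \<ominus>\<^sub>Q word [Kappa, Lam, Kappa],
     word [Eta, Gamma] \<ominus>\<^sub>Q word [Lam, Kappa, Lam],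
     word [Delta, Lam] \<ominus>\<^sub>Q word [Gamma, Beta, Gamma],
     word [Kappa, Eta] \<ominus>\<^sub>Q word [Beta, Gamma, Beta],
     word [Lam, Beta] \<ominus>\<^sub>Q word (concat (replicate (c - 1) [Eta, Delta]) @ [Eta]),
     word [Gamma, Kappa] \<ominus>\<^sub>Q word (concat (replicate (c - 1) [Delta, Eta]) @ [Delta]),
     word [Gamma, Beta, Delta],
     word [Delta, Eta, Gamma],
     word [Lam, Kappa, Eta]}"

definition relI :: "nat \<Rightarrow> ('k::field) kq set" where
  "relI c = gen_ideal (relations c)"

definition central_mod :: "('k::field) kq set \<Rightarrow> 'k kq \<Rightarrow> bool" where
  "central_mod I z \<longleftrightarrow> z \<in> kQ \<and> (\<forall>y\<in>kQ. (z \<otimes>\<^sub>Q y) \<ominus>\<^sub>Q (y \<otimes>\<^sub>Q z) \<in> I)"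

text \<open>Preimages in kQ of e_i \<Lambda> e_i and e_i Z(\<Lambda>) e_i, where \<Lambda> = kQ/I.\<close>

definition corner_pre :: "('k::field) kq set \<Rightarrow> nat \<Rightarrow> 'k kq set" where
  "corner_pre I i = {x\<in>kQ. \<exists>a\<in>kQ. x \<ominus>\<^sub>Q (idem i \<otimes>\<^sub>Q a \<otimes>\<^sub>Q idem i) \<in> I}"

definition center_corner_pre :: "('k::field) kq set \<Rightarrow> nat \<Rightarrow> 'k kq set" where
  "center_corner_pre I i =
     {x\<in>kQ. \<exists>z. central_mod I z \<and> x \<ominus>\<^sub>Q (idem i \<otimes>\<^sub>Q z \<otimes>\<^sub>Q idem i) \<in> I}"

end

theory Submission imports Defs begin

lemma src_range0: "src a = 1 \<or> src a = 2 \<or> src a = 3" by (cases a) auto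

lemma valid_path_set: "valid_path i xs \<Longrightarrow> i \<in> {1,2,3}"
  using src_range0 by (cases xs) auto

lemma take_drop_eq: "n \<le> length zs \<Longrightarrow> (take n zs = xs \<and> drop n zs = ys) = (n = length xs \<and> zs = xs @ ys)"
  by (metis append_eq_conv_conj append_take_drop_id length_take min.absorb2)

lemma src_range: "src a \<in> {1,2,3}" by (cases a) auto
lemma tgt_range: "tgt a \<in> {1,2,3}" by (cases a) auto

lemma valid_path_Cons_set: "valid_path i (a#as) \<Longrightarrow> i \<in> {1,2,3}"
  using src_range by auto


lemma endv_append[simp]: "endv i (xs @ ys) = endv (endv i xs) ys"
  by (induction xs arbitrary: i) auto

lemma valid_path_append[simp]:
  "valid_path i (xs @ ys) = (valid_path i xs \<and> valid_path (endv i xs) ys)"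
  by (induction xs arbitrary: i) (auto dest: valid_path_set)

lemma valid_endv: "valid_path i xs \<Longrightarrow> endv i xs \<in> {1,2,3}"
  by (induction xs arbitrary: i) auto

lemma kq_mult_apply: "(f \<otimes>\<^sub>Q g) (i, xs) = (\<Sum>n\<in>{0..length xs}. f (i, take n xs) * g (endv i (take n xs), drop n xs))"
  by (simp add: kq_mult_def)

lemma pathel_apply: "pathel p q = (if q = p then 1 else 0)" by (simp add: pathel_def)

lemma pathel_mult[simp]:
  "pathel (i, xs) \<otimes>\<^sub>Q pathel (j, ys) = (if endv i xs = j then pathel (i, xs @ ys) else kq_zero)"
proof (rule ext, clarify)
  fix k zs
  have "(pathel (i, xs) \<otimes>\<^sub>Q pathel (j, ys)) (k, zs) =
     (\<Sum>n\<in>{0..length zs}. if n = length xs then (if k = i \<and> zs = xs @ ys \<and> endv i xs = j then 1 else 0) else 0)"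
    unfolding kq_mult_apply
  proof (rule sum.cong[OF refl])
    fix n assume n: "n \<in> {0..length zs}"
    show "pathel (i, xs) (k, take n zs) * pathel (j, ys) (endv k (take n zs), drop n zs) =
      (if n = length xs then (if k = i \<and> zs = xs @ ys \<and> endv i xs = j then 1 else 0) else 0)"
    proof (cases "take n zs = xs \<and> drop n zs = ys")
      case True
      then have "n = length xs" "zs = xs @ ys" using take_drop_eq[of n zs xs ys] n by auto
      then show ?thesis by (simp add: pathel_def)
    next
      case False
      have l: "pathel (i, xs) (k, take n zs) * pathel (j, ys) (endv k (take n zs), drop n zs) = 0"
        using False by (auto simp: pathel_def)
      have r: "\<not> (n = length xs \<and> zs = xs @ ys)" using False take_drop_eq[of n zs xs ys] n by auto
      show ?thesis by (subst l) (use r in auto)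
    qed
  qed
  also have "\<dots> = (if k = i \<and> zs = xs @ ys \<and> endv i xs = j then 1 else 0)"
    by (auto simp: sum.delta)
  finally show "(pathel (i, xs) \<otimes>\<^sub>Q pathel (j, ys)) (k, zs) =
     (if endv i xs = j then pathel (i, xs @ ys) else kq_zero) (k, zs)"
    by (auto simp: pathel_def kq_zero_def)
qed

definition smultQ :: "'k::field \<Rightarrow> 'k kq \<Rightarrow> 'k kq" where
  "smultQ a f = (\<lambda>p. a * f p)"

lemma mult_add_right: "f \<otimes>\<^sub>Q (g \<oplus>\<^sub>Q h) = (f \<otimes>\<^sub>Q g) \<oplus>\<^sub>Q (f \<otimes>\<^sub>Q h)"
  by (rule ext, clarify) (simp add: kq_mult_apply kq_add_def distrib_left sum.distrib)
lemma mult_add_left: "(g \<oplus>\<^sub>Q h) \<otimes>\<^sub>Q f = (g \<otimes>\<^sub>Q f) \<oplus>\<^sub>Q (h \<otimes>\<^sub>Q f)"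
  by (rule ext, clarify) (simp add: kq_mult_apply kq_add_def distrib_right sum.distrib)
lemma mult_diff_right: "f \<otimes>\<^sub>Q (g \<ominus>\<^sub>Q h) = (f \<otimes>\<^sub>Q g) \<ominus>\<^sub>Q (f \<otimes>\<^sub>Q h)"
  by (rule ext, clarify) (simp add: kq_mult_apply kq_diff_def right_diff_distrib sum_subtractf)
lemma mult_diff_left: "(g \<ominus>\<^sub>Q h) \<otimes>\<^sub>Q f = (g \<otimes>\<^sub>Q f) \<ominus>\<^sub>Q (h \<otimes>\<^sub>Q f)"
  by (rule ext, clarify) (simp add: kq_mult_apply kq_diff_def left_diff_distrib sum_subtractf)
lemma mult_smult_right: "f \<otimes>\<^sub>Q (smultQ a g) = smultQ a (f \<otimes>\<^sub>Q g)"
  by (rule ext, clarify) (simp add: kq_mult_apply smultQ_def sum_distrib_left ac_simps)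
lemma mult_smult_left: "(smultQ a g) \<otimes>\<^sub>Q f = smultQ a (g \<otimes>\<^sub>Q f)"
  by (rule ext, clarify) (simp add: kq_mult_apply smultQ_def sum_distrib_left ac_simps)
lemma mult_zero_right[simp]: "f \<otimes>\<^sub>Q kq_zero = kq_zero"
  by (rule ext, clarify) (simp add: kq_mult_apply kq_zero_def)
lemma mult_zero_left[simp]: "kq_zero \<otimes>\<^sub>Q f = kq_zero"
  by (rule ext, clarify) (simp add: kq_mult_apply kq_zero_def)

lemma mult_assoc: "(f \<otimes>\<^sub>Q g) \<otimes>\<^sub>Q h = f \<otimes>\<^sub>Q (g \<otimes>\<^sub>Q h)"
proof (rule ext, clarify)
  fix i :: nat and xs :: "arrow list"
  define L where "L = length xs"
  define F where "F = (\<lambda>m n. f (i, take m xs) * g (endv i (take m xs), drop m (take n xs)) *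
      h (endv i (take n xs), drop n xs))"
  have "((f \<otimes>\<^sub>Q g) \<otimes>\<^sub>Q h) (i, xs) = (\<Sum>n\<in>{0..L}. \<Sum>m\<in>{0..n}. F m n)"
    unfolding kq_mult_apply F_def L_def
    by (auto simp: sum_distrib_right min_def intro!: sum.cong split: if_splits)
  also have "\<dots> = (\<Sum>(n,m)\<in>Sigma {0..L} (\<lambda>n. {0..n}). F m n)"
    by (simp add: sum.Sigma)
  also have "\<dots> = (\<Sum>(m,k)\<in>Sigma {0..L} (\<lambda>m. {0..L-m}). F m (m+k))"
    by (rule sum.reindex_bij_witness[where j="\<lambda>(n,m). (m, n-m)" and i="\<lambda>(m,k). (m+k, m)"]) auto
  also have "\<dots> = (\<Sum>m\<in>{0..L}. \<Sum>k\<in>{0..L-m}. F m (m+k))"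
    by (simp add: sum.Sigma)
  also have "\<dots> = (\<Sum>m\<in>{0..L}. f (i, take m xs) * (g \<otimes>\<^sub>Q h) (endv i (take m xs), drop m xs))"
    unfolding F_def L_def
  proof (intro sum.cong refl)
    fix m assume m: "m \<in> {0..length xs}"
    have "(\<Sum>k\<in>{0..length xs - m}. f (i, take m xs) * g (endv i (take m xs), drop m (take (m + k) xs)) *
          h (endv i (take (m + k) xs), drop (m + k) xs)) =
       (\<Sum>k\<in>{0..length xs - m}. f (i, take m xs) * (g (endv i (take m xs), take k (drop m xs)) *
          h (endv (endv i (take m xs)) (take k (drop m xs)), drop k (drop m xs))))"
    proof (intro sum.cong refl)
      fix k
      have "take (m + k) xs = take m xs @ take k (drop m xs)" by (simp add: take_add)
      then show "f (i, take m xs) * g (endv i (take m xs), drop m (take (m + k) xs)) *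
          h (endv i (take (m + k) xs), drop (m + k) xs) =
         f (i, take m xs) * (g (endv i (take m xs), take k (drop m xs)) *
          h (endv (endv i (take m xs)) (take k (drop m xs)), drop k (drop m xs)))"
        using m by (simp add: drop_take mult.assoc add.commute[of m k])
    qed
    also have "\<dots> = f (i, take m xs) * (g \<otimes>\<^sub>Q h) (endv i (take m xs), drop m xs)"
      by (simp add: kq_mult_apply sum_distrib_left)
    finally show "(\<Sum>k\<in>{0..length xs - m}. f (i, take m xs) * g (endv i (take m xs), drop m (take (m + k) xs)) *
          h (endv i (take (m + k) xs), drop (m + k) xs)) = f (i, take m xs) * (g \<otimes>\<^sub>Q h) (endv i (take m xs), drop m xs)" .
  qed
  also have "\<dots> = (f \<otimes>\<^sub>Q (g \<otimes>\<^sub>Q h)) (i, xs)"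
    by (simp only: kq_mult_apply[of f "g \<otimes>\<^sub>Q h"] L_def)
  finally show "((f \<otimes>\<^sub>Q g) \<otimes>\<^sub>Q h) (i, xs) = (f \<otimes>\<^sub>Q (g \<otimes>\<^sub>Q h)) (i, xs)" .
qed

lemma pathel_kQ: "valid_path i xs \<Longrightarrow> pathel (i, xs) \<in> kQ"
  by (auto simp: kQ_def pathel_def)
lemma zero_kQ[simp]: "kq_zero \<in> kQ"
  by (simp add: kQ_def kq_zero_def)
lemma add_kQ: "f \<in> kQ \<Longrightarrow> g \<in> kQ \<Longrightarrow> f \<oplus>\<^sub>Q g \<in> kQ"
proof -
  assume f: "f \<in> kQ" and g: "g \<in> kQ"
  have "{p. (f \<oplus>\<^sub>Q g) p \<noteq> 0} \<subseteq> {p. f p \<noteq> 0} \<union> {p. g p \<noteq> 0}"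
    by (auto simp: kq_add_def)
  then show ?thesis using f g unfolding kQ_def by (auto simp: kq_add_def intro: finite_subset)
qed
lemma smult_kQ: "f \<in> kQ \<Longrightarrow> smultQ a f \<in> kQ"
proof -
  assume f: "f \<in> kQ"
  have "{p. smultQ a f p \<noteq> 0} \<subseteq> {p. f p \<noteq> 0}"
    by (auto simp: smultQ_def)
  then show ?thesis using f unfolding kQ_def by (auto simp: smultQ_def intro: finite_subset)
qed
lemma diff_kQ: "f \<in> kQ \<Longrightarrow> g \<in> kQ \<Longrightarrow> f \<ominus>\<^sub>Q g \<in> kQ"
proof -
  assume f: "f \<in> kQ" and g: "g \<in> kQ"
  have "{p. (f \<ominus>\<^sub>Q g) p \<noteq> 0} \<subseteq> {p. f p \<noteq> 0} \<union> {p. g p \<noteq> 0}"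
    by (auto simp: kq_diff_def)
  then show ?thesis using f g unfolding kQ_def by (auto simp: kq_diff_def intro: finite_subset)
qed

lemma mult_nonzero:
  assumes "(f \<otimes>\<^sub>Q g) (i, zs) \<noteq> 0"
  shows "\<exists>n\<le>length zs. f (i, take n zs) \<noteq> 0 \<and> g (endv i (take n zs), drop n zs) \<noteq> 0"
proof (rule ccontr)
  assume "\<not> ?thesis"
  then have "\<forall>n\<in>{0..length zs}. f (i, take n zs) * g (endv i (take n zs), drop n zs) = 0" by auto
  then have "(f \<otimes>\<^sub>Q g) (i, zs) = 0" unfolding kq_mult_apply by (rule sum.neutral)
  with assms show False by simp
qed

lemma mult_kQ: "f \<in> kQ \<Longrightarrow> g \<in> kQ \<Longrightarrow> f \<otimes>\<^sub>Q g \<in> kQ"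
proof -
  assume f: "f \<in> kQ" and g: "g \<in> kQ"
  let ?S = "(\<lambda>((i,xs),(j,ys)). (i, xs @ ys)) ` ({p. f p \<noteq> 0} \<times> {p. g p \<noteq> 0})"
  have sub: "{p. (f \<otimes>\<^sub>Q g) p \<noteq> 0} \<subseteq> ?S"
  proof
    fix p assume "p \<in> {p. (f \<otimes>\<^sub>Q g) p \<noteq> 0}"
    then obtain i zs where p: "p = (i, zs)" and nz: "(f \<otimes>\<^sub>Q g) (i, zs) \<noteq> 0"
      by (cases p) auto
    from mult_nonzero[OF nz] obtain n where "f (i, take n zs) \<noteq> 0"
      "g (endv i (take n zs), drop n zs) \<noteq> 0" by blast
    then have "((i, take n zs), (endv i (take n zs), drop n zs)) \<in> {p. f p \<noteq> 0} \<times> {p. g p \<noteq> 0}" by simp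
    then show "p \<in> ?S" unfolding p by (rule rev_image_eqI) simp
  qed
  have fin: "finite ?S" using f g unfolding kQ_def by auto
  have val: "valid_path i zs" if "(f \<otimes>\<^sub>Q g) (i, zs) \<noteq> 0" for i zs
  proof -
    from mult_nonzero[OF that] obtain n where "f (i, take n zs) \<noteq> 0"
      "g (endv i (take n zs), drop n zs) \<noteq> 0" by blast
    then have "valid_path i (take n zs)" "valid_path (endv i (take n zs)) (drop n zs)"
      using f g unfolding kQ_def by auto
    then show ?thesis using valid_path_append[of i "take n zs" "drop n zs"] by simp
  qed
  show ?thesis unfolding kQ_def using finite_subset[OF sub fin] val by auto
qed

lemma idem_mult_left: "idem i \<otimes>\<^sub>Q f = (\<lambda>(k, xs). if k = i then f (k, xs) else 0)"
proof (rule ext, clarify)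
  fix k :: nat and xs :: "arrow list"
  have "(idem i \<otimes>\<^sub>Q f) (k, xs) = (\<Sum>n\<in>{0..length xs}. if n = 0 then (if k = i then f (k, xs) else 0) else 0)"
    unfolding kq_mult_apply idem_def
    by (rule sum.cong) (auto simp: pathel_def)
  then show "(idem i \<otimes>\<^sub>Q f) (k, xs) = (if k = i then f (k, xs) else 0)"
    by (simp add: sum.delta)
qed

lemma idem_mult_right: "f \<otimes>\<^sub>Q idem i = (\<lambda>(k, xs). if endv k xs = i then f (k, xs) else 0)"
proof (rule ext, clarify)
  fix k :: nat and xs :: "arrow list"
  have "(f \<otimes>\<^sub>Q idem i) (k, xs) = (\<Sum>n\<in>{0..length xs}. if n = length xs then (if endv k xs = i then f (k, xs) else 0) else 0)"
    unfolding kq_mult_apply idem_def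
    by (rule sum.cong) (auto simp: pathel_def)
  then show "(f \<otimes>\<^sub>Q idem i) (k, xs) = (if endv k xs = i then f (k, xs) else 0)"
    by (simp add: sum.delta)
qed

lemma kQ_induct:
  assumes "y \<in> kQ" and "P kq_zero"
    and step: "\<And>y c i xs. y \<in> kQ \<Longrightarrow> P y \<Longrightarrow> valid_path i xs \<Longrightarrow> P (y \<oplus>\<^sub>Q smultQ c (pathel (i, xs)))"
  shows "P y"
proof -
  have "\<forall>y. y \<in> kQ \<longrightarrow> card {p. y p \<noteq> 0} = N \<longrightarrow> P y" for N
  proof (induction N)
    case 0
    show ?case
    proof (intro allI impI)
      fix y :: "'a kq" assume y: "y \<in> kQ" "card {p. y p \<noteq> 0} = 0"
      then have "{p. y p \<noteq> 0} = {}" unfolding kQ_def by auto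
      then have "y = kq_zero" by (auto simp: kq_zero_def)
      then show "P y" using assms(2) by simp
    qed
  next
    case (Suc N)
    show ?case
    proof (intro allI impI)
      fix y :: "'a kq" assume y: "y \<in> kQ" "card {p. y p \<noteq> 0} = Suc N"
      then have fin: "finite {p. y p \<noteq> 0}" unfolding kQ_def by auto
      from y(2) obtain p where p: "y p \<noteq> 0" by (metis (mono_tags) Collect_empty_eq card_0_eq nat.distinct(1) fin)
      obtain i xs where pi: "p = (i, xs)" by (cases p)
      define y' where "y' = y(p := 0)"
      have val: "valid_path i xs" using y(1) p pi unfolding kQ_def by auto
      have sup: "{q. y' q \<noteq> 0} = {q. y q \<noteq> 0} - {p}" by (auto simp: y'_def)
      have y'k: "y' \<in> kQ" using y(1) sup fin unfolding kQ_def by (auto simp: y'_def)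
      have "card {q. y' q \<noteq> 0} = N" using sup y(2) fin p by simp
      then have "P y'" using Suc.IH y'k by blast
      then have "P (y' \<oplus>\<^sub>Q smultQ (y p) (pathel (i, xs)))" using step y'k val by blast
      moreover have "y' \<oplus>\<^sub>Q smultQ (y p) (pathel (i, xs)) = y"
        by (auto simp: y'_def kq_add_def smultQ_def pathel_def pi)
      ultimately show "P y" by simp
    qed
  qed
  then show ?thesis using assms(1) by blast
qed

lemma add_zero_simps[simp]: "kq_zero \<oplus>\<^sub>Q f = f" "f \<oplus>\<^sub>Q kq_zero = f" "f \<ominus>\<^sub>Q kq_zero = f"
  "f \<ominus>\<^sub>Q f = kq_zero" "smultQ a kq_zero = kq_zero"
  by (auto simp: kq_add_def kq_diff_def kq_zero_def smultQ_def)

lemma I_smult: "x \<in> gen_ideal R \<Longrightarrow> smultQ a x \<in> gen_ideal R"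
proof (induction rule: gen_ideal.induct)
  case zero then show ?case by (simp add: gen_ideal.zero)
next
  case (gen r b c)
  have "smultQ a ((b \<otimes>\<^sub>Q r) \<otimes>\<^sub>Q c) = ((smultQ a b) \<otimes>\<^sub>Q r) \<otimes>\<^sub>Q c"
    by (simp add: mult_smult_left)
  then show ?case using gen smult_kQ gen_ideal.gen by metis
next
  case (add x y)
  have "smultQ a (x \<oplus>\<^sub>Q y) = smultQ a x \<oplus>\<^sub>Q smultQ a y"
    by (auto simp: smultQ_def kq_add_def distrib_left)
  then show ?case using add gen_ideal.add by metis
qed

lemma I_diff: "x \<in> gen_ideal R \<Longrightarrow> y \<in> gen_ideal R \<Longrightarrow> x \<ominus>\<^sub>Q y \<in> gen_ideal R"
proof -
  assume x: "x \<in> gen_ideal R" and y: "y \<in> gen_ideal R"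
  have "x \<ominus>\<^sub>Q y = x \<oplus>\<^sub>Q smultQ (-1) y" by (auto simp: kq_diff_def kq_add_def smultQ_def)
  then show ?thesis using x I_smult[OF y] gen_ideal.add by metis
qed

lemma I_lmult: "x \<in> gen_ideal R \<Longrightarrow> y \<in> kQ \<Longrightarrow> y \<otimes>\<^sub>Q x \<in> gen_ideal R"
proof (induction rule: gen_ideal.induct)
  case zero then show ?case by (simp add: gen_ideal.zero)
next
  case (gen r b c)
  have "y \<otimes>\<^sub>Q ((b \<otimes>\<^sub>Q r) \<otimes>\<^sub>Q c) = ((y \<otimes>\<^sub>Q b) \<otimes>\<^sub>Q r) \<otimes>\<^sub>Q c"
    by (simp add: mult_assoc)
  then show ?case using gen mult_kQ gen_ideal.gen by metis
next
  case (add x1 x2)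
  then show ?case by (simp add: mult_add_right gen_ideal.add)
qed

lemma I_rmult: "x \<in> gen_ideal R \<Longrightarrow> y \<in> kQ \<Longrightarrow> x \<otimes>\<^sub>Q y \<in> gen_ideal R"
proof (induction rule: gen_ideal.induct)
  case zero then show ?case by (simp add: gen_ideal.zero)
next
  case (gen r b c)
  have "((b \<otimes>\<^sub>Q r) \<otimes>\<^sub>Q c) \<otimes>\<^sub>Q y = (b \<otimes>\<^sub>Q r) \<otimes>\<^sub>Q (c \<otimes>\<^sub>Q y)"
    by (simp add: mult_assoc)
  then show ?case using gen mult_kQ gen_ideal.gen by metis
next
  case (add x1 x2)
  then show ?case by (simp add: mult_add_left gen_ideal.add)
qed

lemma I_chain: "x \<ominus>\<^sub>Q y \<in> gen_ideal R \<Longrightarrow> y \<ominus>\<^sub>Q z \<in> gen_ideal R \<Longrightarrow> x \<ominus>\<^sub>Q z \<in> gen_ideal R"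
proof -
  assume a: "x \<ominus>\<^sub>Q y \<in> gen_ideal R" and b: "y \<ominus>\<^sub>Q z \<in> gen_ideal R"
  have "x \<ominus>\<^sub>Q z = (x \<ominus>\<^sub>Q y) \<oplus>\<^sub>Q (y \<ominus>\<^sub>Q z)" by (auto simp: kq_diff_def kq_add_def)
  then show ?thesis using gen_ideal.add[OF a b] by simp
qed

lemma I_chain0: "x \<ominus>\<^sub>Q y \<in> gen_ideal R \<Longrightarrow> y \<in> gen_ideal R \<Longrightarrow> x \<in> gen_ideal R"
  using I_chain[of x y R kq_zero] by simp

lemma I_neg: "x \<in> gen_ideal R \<Longrightarrow> kq_zero \<ominus>\<^sub>Q x \<in> gen_ideal R"
  using I_diff gen_ideal.zero by blast



lemmas kQ_induct' = kQ_induct[consumes 1, case_names zero step]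

lemmas ring_norm = mult_diff_left mult_diff_right mult_add_left mult_add_right
  mult_smult_left mult_smult_right mult_assoc

lemma central_zero: "central_mod (gen_ideal R) kq_zero"
  by (simp add: central_mod_def gen_ideal.zero)

lemma central_add:
  assumes a: "central_mod (gen_ideal R) z" and b: "central_mod (gen_ideal R) z'"
  shows "central_mod (gen_ideal R) (z \<oplus>\<^sub>Q z')"
proof -
  have zk: "z \<in> kQ" "z' \<in> kQ" using a b by (simp_all add: central_mod_def)
  have "(z \<oplus>\<^sub>Q z') \<otimes>\<^sub>Q y \<ominus>\<^sub>Q y \<otimes>\<^sub>Q (z \<oplus>\<^sub>Q z') \<in> gen_ideal R" if y: "y \<in> kQ" for y
  proof -
    have "(z \<oplus>\<^sub>Q z') \<otimes>\<^sub>Q y \<ominus>\<^sub>Q y \<otimes>\<^sub>Q (z \<oplus>\<^sub>Q z') = (z \<otimes>\<^sub>Q y \<ominus>\<^sub>Q y \<otimes>\<^sub>Q z) \<oplus>\<^sub>Q (z' \<otimes>\<^sub>Q y \<ominus>\<^sub>Q y \<otimes>\<^sub>Q z')"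
      by (simp only: ring_norm) (simp add: kq_add_def kq_diff_def fun_eq_iff algebra_simps)
    then show ?thesis using a b y gen_ideal.add unfolding central_mod_def by metis
  qed
  then show ?thesis unfolding central_mod_def using zk add_kQ by blast
qed

lemma central_smult:
  assumes a: "central_mod (gen_ideal R) z"
  shows "central_mod (gen_ideal R) (smultQ c z)"
proof -
  have zk: "z \<in> kQ" using a by (simp_all add: central_mod_def)
  have "(smultQ c z) \<otimes>\<^sub>Q y \<ominus>\<^sub>Q y \<otimes>\<^sub>Q (smultQ c z) \<in> gen_ideal R" if y: "y \<in> kQ" for y
  proof -
    have "(smultQ c z) \<otimes>\<^sub>Q y \<ominus>\<^sub>Q y \<otimes>\<^sub>Q (smultQ c z) = smultQ c (z \<otimes>\<^sub>Q y \<ominus>\<^sub>Q y \<otimes>\<^sub>Q z)"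
      by (simp only: ring_norm) (simp add: smultQ_def kq_diff_def fun_eq_iff algebra_simps)
    then show ?thesis using a y I_smult unfolding central_mod_def by metis
  qed
  then show ?thesis unfolding central_mod_def using zk smult_kQ by blast
qed

lemma central_mult:
  assumes a: "central_mod (gen_ideal R) z" and b: "central_mod (gen_ideal R) z'"
  shows "central_mod (gen_ideal R) (z \<otimes>\<^sub>Q z')"
proof -
  have zk: "z \<in> kQ" "z' \<in> kQ" using a b by (simp_all add: central_mod_def)
  have "(z \<otimes>\<^sub>Q z') \<otimes>\<^sub>Q y \<ominus>\<^sub>Q y \<otimes>\<^sub>Q (z \<otimes>\<^sub>Q z') \<in> gen_ideal R" if y: "y \<in> kQ" for y
  proof -
    have "(z \<otimes>\<^sub>Q z') \<otimes>\<^sub>Q y \<ominus>\<^sub>Q y \<otimes>\<^sub>Q (z \<otimes>\<^sub>Q z') = (z \<otimes>\<^sub>Q (z' \<otimes>\<^sub>Q y \<ominus>\<^sub>Q y \<otimes>\<^sub>Q z')) \<oplus>\<^sub>Q ((z \<otimes>\<^sub>Q y \<ominus>\<^sub>Q y \<otimes>\<^sub>Q z) \<otimes>\<^sub>Q z')"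
      by (simp only: ring_norm) (simp add: kq_add_def kq_diff_def fun_eq_iff algebra_simps)
    moreover have "z \<otimes>\<^sub>Q (z' \<otimes>\<^sub>Q y \<ominus>\<^sub>Q y \<otimes>\<^sub>Q z') \<in> gen_ideal R"
      using b y zk by (intro I_lmult) (auto simp: central_mod_def)
    moreover have "(z \<otimes>\<^sub>Q y \<ominus>\<^sub>Q y \<otimes>\<^sub>Q z) \<otimes>\<^sub>Q z' \<in> gen_ideal R"
      using a y zk by (intro I_rmult) (auto simp: central_mod_def)
    ultimately show ?thesis using gen_ideal.add by metis
  qed
  then show ?thesis unfolding central_mod_def using zk mult_kQ by blast
qed

definition one :: "('k::field) kq" where "one = idem 1 \<oplus>\<^sub>Q idem 2 \<oplus>\<^sub>Q idem 3"

lemma idem_kQ: "i \<in> {1,2,3} \<Longrightarrow> idem i \<in> kQ"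
  unfolding idem_def by (rule pathel_kQ) simp

lemma one_kQ: "one \<in> kQ" unfolding one_def by (intro add_kQ idem_kQ) auto

lemma one_left: assumes "y \<in> kQ" shows "one \<otimes>\<^sub>Q y = y"
proof -
  have h: "y (a, b) = 0" if "a \<notin> {1,2,3}" for a b using assms that valid_path_set unfolding kQ_def by blast
  show ?thesis unfolding one_def
    by (simp only: mult_add_left) (auto simp: idem_mult_left kq_add_def fun_eq_iff h)
qed

lemma one_right: assumes "y \<in> kQ" shows "y \<otimes>\<^sub>Q one = y"
proof -
  have h: "y (a, b) = 0" if "endv a b \<notin> {1,2,3}" for a b using assms that valid_endv unfolding kQ_def by blast
  show ?thesis unfolding one_def
    by (simp only: mult_add_right) (auto simp: idem_mult_right kq_add_def fun_eq_iff h)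
qed

lemma central_one: "central_mod (gen_ideal R) one"
  unfolding central_mod_def
proof (intro conjI ballI one_kQ)
  fix y :: "'a kq" assume "y \<in> kQ"
  then have "one \<otimes>\<^sub>Q y \<ominus>\<^sub>Q y \<otimes>\<^sub>Q one = kq_zero" by (simp add: one_left one_right)
  then show "one \<otimes>\<^sub>Q y \<ominus>\<^sub>Q y \<otimes>\<^sub>Q one \<in> gen_ideal R" by (simp add: gen_ideal.zero)
qed

lemma central_from_gens:
  assumes z: "z \<in> kQ"
    and idm: "\<And>j. j \<in> {1,2,3} \<Longrightarrow> z \<otimes>\<^sub>Q idem j \<ominus>\<^sub>Q idem j \<otimes>\<^sub>Q z \<in> gen_ideal R"
    and arr: "\<And>a. z \<otimes>\<^sub>Q pathel (src a, [a]) \<ominus>\<^sub>Q pathel (src a, [a]) \<otimes>\<^sub>Q z \<in> gen_ideal R"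
  shows "central_mod (gen_ideal R) z"
proof -
  have path: "z \<otimes>\<^sub>Q pathel (i, xs) \<ominus>\<^sub>Q pathel (i, xs) \<otimes>\<^sub>Q z \<in> gen_ideal R" if "valid_path i xs" for i xs
    using that
  proof (induction xs arbitrary: i)
    case Nil
    then show ?case using idm[of i] by (simp add: idem_def)
  next
    case (Cons a as)
    then have ia: "i = src a" and va: "valid_path (tgt a) as" by auto
    have split: "pathel (i, a # as) = pathel (src a, [a]) \<otimes>\<^sub>Q pathel (tgt a, as)"
      using ia by simp
    have "z \<otimes>\<^sub>Q pathel (i, a # as) \<ominus>\<^sub>Q pathel (i, a # as) \<otimes>\<^sub>Q z =
      ((z \<otimes>\<^sub>Q pathel (src a, [a]) \<ominus>\<^sub>Q pathel (src a, [a]) \<otimes>\<^sub>Q z) \<otimes>\<^sub>Q pathel (tgt a, as)) \<oplus>\<^sub>Q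
      (pathel (src a, [a]) \<otimes>\<^sub>Q (z \<otimes>\<^sub>Q pathel (tgt a, as) \<ominus>\<^sub>Q pathel (tgt a, as) \<otimes>\<^sub>Q z))"
      unfolding split
      by (simp only: ring_norm) (simp add: kq_add_def kq_diff_def fun_eq_iff algebra_simps)
    moreover have "pathel (tgt a, as) \<in> kQ" using va by (rule pathel_kQ)
    moreover have "pathel (src a, [a]) \<in> kQ" by (rule pathel_kQ) (use tgt_range[of a] in simp)
    ultimately show ?case using Cons.IH[OF va] arr[of a] gen_ideal.add I_lmult I_rmult by metis
  qed
  have "z \<otimes>\<^sub>Q y \<ominus>\<^sub>Q y \<otimes>\<^sub>Q z \<in> gen_ideal R" if "y \<in> kQ" for y
    using that
  proof (induction rule: kQ_induct')
    case zero then show ?case by (simp add: gen_ideal.zero)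
  next
    case (step y c i xs)
    have "z \<otimes>\<^sub>Q (y \<oplus>\<^sub>Q smultQ c (pathel (i, xs))) \<ominus>\<^sub>Q (y \<oplus>\<^sub>Q smultQ c (pathel (i, xs))) \<otimes>\<^sub>Q z =
       (z \<otimes>\<^sub>Q y \<ominus>\<^sub>Q y \<otimes>\<^sub>Q z) \<oplus>\<^sub>Q smultQ c (z \<otimes>\<^sub>Q pathel (i, xs) \<ominus>\<^sub>Q pathel (i, xs) \<otimes>\<^sub>Q z)"
      by (simp only: ring_norm) (simp add: kq_add_def kq_diff_def smultQ_def fun_eq_iff algebra_simps)
    then show ?case using step path I_smult gen_ideal.add by metis
  qed
  then show ?thesis unfolding central_mod_def using z by blast
qed

definition Tset :: "('k::field) kq set \<Rightarrow> nat \<Rightarrow> 'k kq set" where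
  "Tset R i = {u\<in>kQ. \<exists>z. central_mod (gen_ideal R) z \<and> u \<ominus>\<^sub>Q (idem i \<otimes>\<^sub>Q z \<otimes>\<^sub>Q idem i) \<in> gen_ideal R}"

lemma idem_idem_assoc: "idem i \<otimes>\<^sub>Q (idem i \<otimes>\<^sub>Q f) = idem i \<otimes>\<^sub>Q f"
  by (simp add: mult_assoc[symmetric] idem_def)

lemma idem_idem: "idem i \<otimes>\<^sub>Q idem i = idem i"
  by (simp add: idem_def)

lemma T_zero: "kq_zero \<in> Tset R i"
  unfolding Tset_def by (auto simp: gen_ideal.zero intro!: exI[of _ kq_zero] central_zero)

lemma T_base: "central_mod (gen_ideal R) z \<Longrightarrow> u \<in> kQ \<Longrightarrow> idem i \<otimes>\<^sub>Q z \<otimes>\<^sub>Q idem i = u \<Longrightarrow> u \<in> Tset R i"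
  unfolding Tset_def by (auto intro!: exI[of _ z] simp: gen_ideal.zero)

lemma T_idem: "i \<in> {1,2,3} \<Longrightarrow> idem i \<in> Tset R i"
  by (rule T_base[OF central_one idem_kQ]) (simp_all add: one_right idem_kQ, simp add: idem_def)

lemma T_add: "u \<in> Tset R i \<Longrightarrow> v \<in> Tset R i \<Longrightarrow> u \<oplus>\<^sub>Q v \<in> Tset R i"
proof -
  assume "u \<in> Tset R i" "v \<in> Tset R i"
  then obtain z z' where u: "u \<in> kQ" "central_mod (gen_ideal R) z" "u \<ominus>\<^sub>Q (idem i \<otimes>\<^sub>Q z \<otimes>\<^sub>Q idem i) \<in> gen_ideal R"
    and v: "v \<in> kQ" "central_mod (gen_ideal R) z'" "v \<ominus>\<^sub>Q (idem i \<otimes>\<^sub>Q z' \<otimes>\<^sub>Q idem i) \<in> gen_ideal R"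
    unfolding Tset_def by blast
  have eq: "(u \<oplus>\<^sub>Q v) \<ominus>\<^sub>Q (idem i \<otimes>\<^sub>Q (z \<oplus>\<^sub>Q z') \<otimes>\<^sub>Q idem i) =
     (u \<ominus>\<^sub>Q (idem i \<otimes>\<^sub>Q z \<otimes>\<^sub>Q idem i)) \<oplus>\<^sub>Q (v \<ominus>\<^sub>Q (idem i \<otimes>\<^sub>Q z' \<otimes>\<^sub>Q idem i))"
    by (simp only: ring_norm) (simp add: kq_add_def kq_diff_def fun_eq_iff algebra_simps)
  have d: "(u \<oplus>\<^sub>Q v) \<ominus>\<^sub>Q (idem i \<otimes>\<^sub>Q (z \<oplus>\<^sub>Q z') \<otimes>\<^sub>Q idem i) \<in> gen_ideal R"
    unfolding eq using u(3) v(3) by (rule gen_ideal.add)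
  show ?thesis unfolding Tset_def using add_kQ[OF u(1) v(1)] central_add[OF u(2) v(2)] d by blast
qed

lemma T_smult: "u \<in> Tset R i \<Longrightarrow> smultQ c u \<in> Tset R i"
proof -
  assume "u \<in> Tset R i"
  then obtain z where u: "u \<in> kQ" "central_mod (gen_ideal R) z" "u \<ominus>\<^sub>Q (idem i \<otimes>\<^sub>Q z \<otimes>\<^sub>Q idem i) \<in> gen_ideal R"
    unfolding Tset_def by blast
  have eq: "smultQ c u \<ominus>\<^sub>Q (idem i \<otimes>\<^sub>Q smultQ c z \<otimes>\<^sub>Q idem i) =
     smultQ c (u \<ominus>\<^sub>Q (idem i \<otimes>\<^sub>Q z \<otimes>\<^sub>Q idem i))"
    by (simp only: ring_norm) (simp add: smultQ_def kq_diff_def fun_eq_iff algebra_simps)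
  have d: "smultQ c u \<ominus>\<^sub>Q (idem i \<otimes>\<^sub>Q smultQ c z \<otimes>\<^sub>Q idem i) \<in> gen_ideal R"
    unfolding eq using u(3) by (rule I_smult)
  show ?thesis unfolding Tset_def using smult_kQ[OF u(1)] central_smult[OF u(2)] d by blast
qed

lemma T_cong: "v \<in> kQ \<Longrightarrow> v \<ominus>\<^sub>Q u \<in> gen_ideal R \<Longrightarrow> u \<in> Tset R i \<Longrightarrow> v \<in> Tset R i"
  unfolding Tset_def using I_chain by blast

lemma T_mult: assumes i: "i \<in> {1,2,3}" and "u \<in> Tset R i" "v \<in> Tset R i" shows "u \<otimes>\<^sub>Q v \<in> Tset R i"
proof -
  obtain z z' where u: "u \<in> kQ" "central_mod (gen_ideal R) z" "u \<ominus>\<^sub>Q (idem i \<otimes>\<^sub>Q z \<otimes>\<^sub>Q idem i) \<in> gen_ideal R"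
    and v: "v \<in> kQ" "central_mod (gen_ideal R) z'" "v \<ominus>\<^sub>Q (idem i \<otimes>\<^sub>Q z' \<otimes>\<^sub>Q idem i) \<in> gen_ideal R"
    using assms unfolding Tset_def by blast
  let ?e = "idem i :: 'a kq"
  have e: "?e \<in> kQ" using i by (rule idem_kQ)
  have zk: "z \<in> kQ" "z' \<in> kQ" using u v unfolding central_mod_def by auto
  have eq: "u \<otimes>\<^sub>Q v \<ominus>\<^sub>Q (?e \<otimes>\<^sub>Q (z \<otimes>\<^sub>Q z') \<otimes>\<^sub>Q ?e) =
    ((u \<ominus>\<^sub>Q (?e \<otimes>\<^sub>Q z \<otimes>\<^sub>Q ?e)) \<otimes>\<^sub>Q v \<oplus>\<^sub>Q (?e \<otimes>\<^sub>Q z \<otimes>\<^sub>Q ?e) \<otimes>\<^sub>Q (v \<ominus>\<^sub>Q (?e \<otimes>\<^sub>Q z' \<otimes>\<^sub>Q ?e)))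
     \<oplus>\<^sub>Q ((?e \<otimes>\<^sub>Q z) \<otimes>\<^sub>Q ((kq_zero \<ominus>\<^sub>Q (z' \<otimes>\<^sub>Q ?e \<ominus>\<^sub>Q ?e \<otimes>\<^sub>Q z')) \<otimes>\<^sub>Q ?e))"
    by (simp only: ring_norm idem_idem_assoc idem_idem mult_zero_left mult_zero_right) (simp add: kq_add_def kq_diff_def kq_zero_def fun_eq_iff algebra_simps)
  have c: "z' \<otimes>\<^sub>Q ?e \<ominus>\<^sub>Q ?e \<otimes>\<^sub>Q z' \<in> gen_ideal R" using v(2) e unfolding central_mod_def by blast
  have "u \<otimes>\<^sub>Q v \<ominus>\<^sub>Q (?e \<otimes>\<^sub>Q (z \<otimes>\<^sub>Q z') \<otimes>\<^sub>Q ?e) \<in> gen_ideal R"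
    unfolding eq
    by (intro gen_ideal.add I_rmult I_lmult I_neg c u(3) v(3) v(1) e mult_kQ zk)
  then show ?thesis unfolding Tset_def using central_mult[OF u(2) v(2)] mult_kQ[OF u(1) v(1)] by blast
qed



definition rep :: "arrow \<Rightarrow> arrow \<Rightarrow> nat \<Rightarrow> arrow list" where
  "rep a b m = concat (replicate m [a, b])"

lemma rep_0[simp]: "rep a b 0 = []" by (simp add: rep_def)
lemma rep_Suc: "rep a b (Suc m) = a # b # rep a b m" by (simp add: rep_def)
lemma rep_Suc': "rep a b (Suc m) = rep a b m @ [a, b]"
  by (simp add: rep_def replicate_append_same[symmetric])

lemma endv_rep[simp]: "endv 2 (rep Delta Eta m) = 2" "endv 3 (rep Eta Delta m) = 3"
  by (induction m) (simp_all add: rep_Suc)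
lemma valid_rep[simp]: "valid_path 2 (rep Delta Eta m)" "valid_path 3 (rep Eta Delta m)"
  by (induction m) (simp_all add: rep_Suc)
lemma hd_rep_app[simp]: "hd (rep a b m @ [a]) = a" by (cases m) (simp_all add: rep_Suc)

lemma rel_rewrite:
  assumes r: "word lhs \<ominus>\<^sub>Q word rhs \<in> R" and ne: "lhs \<noteq> []" "rhs \<noteq> []"
    and s: "src (hd rhs) = src (hd lhs)"
    and e: "endv (src (hd rhs)) rhs = endv (src (hd lhs)) lhs"
    and v: "valid_path i us" "endv i us = src (hd lhs)" "valid_path (endv (src (hd lhs)) lhs) ws"
  shows "pathel (i, us @ lhs @ ws) \<ominus>\<^sub>Q pathel (i, us @ rhs @ ws) \<in> gen_ideal R"
proof -
  have "pathel (i, us) \<otimes>\<^sub>Q (word lhs \<ominus>\<^sub>Q word rhs) \<otimes>\<^sub>Q pathel (endv (src (hd lhs)) lhs, ws) \<in> gen_ideal R"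
    by (rule gen_ideal.gen[OF r]) (use v in \<open>auto intro: pathel_kQ\<close>)
  moreover have "pathel (i, us) \<otimes>\<^sub>Q (word lhs \<ominus>\<^sub>Q word rhs) \<otimes>\<^sub>Q pathel (endv (src (hd lhs)) lhs, ws)
     = pathel (i, us @ lhs @ ws) \<ominus>\<^sub>Q pathel (i, us @ rhs @ ws)"
    using s e v by (simp add: mult_diff_left mult_diff_right word_def)
  ultimately show ?thesis by (rule back_subst)
qed

lemma rel_zero:
  assumes r: "word w \<in> R"
    and v: "valid_path i us" "endv i us = src (hd w)" "valid_path (endv (src (hd w)) w) ws"
  shows "pathel (i, us @ w @ ws) \<in> gen_ideal R"
proof -
  have "pathel (i, us) \<otimes>\<^sub>Q word w \<otimes>\<^sub>Q pathel (endv (src (hd w)) w, ws) \<in> gen_ideal R"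
    by (rule gen_ideal.gen[OF r]) (use v in \<open>auto intro: pathel_kQ\<close>)
  moreover have "pathel (i, us) \<otimes>\<^sub>Q word w \<otimes>\<^sub>Q pathel (endv (src (hd w)) w, ws)
     = pathel (i, us @ w @ ws)"
    using v by (simp add: word_def)
  ultimately show ?thesis by (rule back_subst)
qed

lemma R1: "valid_path i (us @ [Beta,Delta] @ ws) \<Longrightarrow>
  pathel (i, us @ [Beta,Delta] @ ws) \<ominus>\<^sub>Q pathel (i, us @ [Kappa,Lam,Kappa] @ ws) \<in> relI c"
  unfolding relI_def by (rule rel_rewrite) (auto simp: relations_def)
lemma R2: "valid_path i (us @ [Eta,Gamma] @ ws) \<Longrightarrow>
  pathel (i, us @ [Eta,Gamma] @ ws) \<ominus>\<^sub>Q pathel (i, us @ [Lam,Kappa,Lam] @ ws) \<in> relI c"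
  unfolding relI_def by (rule rel_rewrite) (auto simp: relations_def)
lemma R3: "valid_path i (us @ [Delta,Lam] @ ws) \<Longrightarrow>
  pathel (i, us @ [Delta,Lam] @ ws) \<ominus>\<^sub>Q pathel (i, us @ [Gamma,Beta,Gamma] @ ws) \<in> relI c"
  unfolding relI_def by (rule rel_rewrite) (auto simp: relations_def)
lemma R4: "valid_path i (us @ [Kappa,Eta] @ ws) \<Longrightarrow>
  pathel (i, us @ [Kappa,Eta] @ ws) \<ominus>\<^sub>Q pathel (i, us @ [Beta,Gamma,Beta] @ ws) \<in> relI c"
  unfolding relI_def by (rule rel_rewrite) (auto simp: relations_def)
lemma R5: "valid_path i (us @ [Lam,Beta] @ ws) \<Longrightarrow>
  pathel (i, us @ [Lam,Beta] @ ws) \<ominus>\<^sub>Q pathel (i, us @ (rep Eta Delta (c - 1) @ [Eta]) @ ws) \<in> relI c"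
  unfolding relI_def by (rule rel_rewrite) (auto simp: relations_def rep_def[symmetric])
lemma R6: "valid_path i (us @ [Gamma,Kappa] @ ws) \<Longrightarrow>
  pathel (i, us @ [Gamma,Kappa] @ ws) \<ominus>\<^sub>Q pathel (i, us @ (rep Delta Eta (c - 1) @ [Delta]) @ ws) \<in> relI c"
  unfolding relI_def by (rule rel_rewrite) (auto simp: relations_def rep_def[symmetric])
lemma Z1: "valid_path i (us @ [Gamma,Beta,Delta] @ ws) \<Longrightarrow> pathel (i, us @ [Gamma,Beta,Delta] @ ws) \<in> relI c"
  unfolding relI_def by (rule rel_zero) (auto simp: relations_def)
lemma Z2: "valid_path i (us @ [Delta,Eta,Gamma] @ ws) \<Longrightarrow> pathel (i, us @ [Delta,Eta,Gamma] @ ws) \<in> relI c"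
  unfolding relI_def by (rule rel_zero) (auto simp: relations_def)
lemma Z3: "valid_path i (us @ [Lam,Kappa,Eta] @ ws) \<Longrightarrow> pathel (i, us @ [Lam,Kappa,Eta] @ ws) \<in> relI c"
  unfolding relI_def by (rule rel_zero) (auto simp: relations_def)


lemma Ib: assumes m: "c - 1 = Suc m" shows "pathel (3, [Eta,Gamma,Beta]) \<in> relI c"
proof -
  have s1: "pathel (3,[Eta,Gamma,Beta]) \<ominus>\<^sub>Q pathel (3,[Lam,Kappa,Lam,Beta]) \<in> relI c"
    using R2[of 3 "[]" "[Beta]" c] by simp
  have s2: "pathel (3,[Lam,Kappa,Lam,Beta]) \<ominus>\<^sub>Q pathel (3, Lam#Kappa#Eta#Delta#rep Eta Delta m @ [Eta]) \<in> relI c"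
    using R5[of 3 "[Lam,Kappa]" "[]" c] m by (simp add: rep_Suc)
  have s3: "pathel (3, Lam#Kappa#Eta#Delta#rep Eta Delta m @ [Eta]) \<in> relI c"
    using Z3[of 3 "[]" "Delta # rep Eta Delta m @ [Eta]" c] by simp
  show ?thesis unfolding relI_def by (rule I_chain0[OF s1[unfolded relI_def] I_chain0[OF s2[unfolded relI_def] s3[unfolded relI_def]]])
qed

lemma Ic: assumes m: "c - 1 = Suc m" shows "pathel (1, [Beta,Gamma,Kappa]) \<in> relI c"
proof -
  have s1: "pathel (1,[Beta,Gamma,Kappa]) \<ominus>\<^sub>Q pathel (1, Beta#Delta#Eta#rep Delta Eta m @ [Delta]) \<in> relI c"
    using R6[of 1 "[Beta]" "[]" c] m by (simp add: rep_Suc)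
  have s2: "pathel (1, Beta#Delta#Eta#rep Delta Eta m @ [Delta]) \<ominus>\<^sub>Q pathel (1, Kappa#Lam#Kappa#Eta#rep Delta Eta m @ [Delta]) \<in> relI c"
    using R1[of 1 "[]" "Eta # rep Delta Eta m @ [Delta]" c] by simp
  have s3: "pathel (1, Kappa#Lam#Kappa#Eta#rep Delta Eta m @ [Delta]) \<in> relI c"
    using Z3[of 1 "[Kappa]" "rep Delta Eta m @ [Delta]" c] by simp
  show ?thesis unfolding relI_def by (rule I_chain0[OF s1[unfolded relI_def] I_chain0[OF s2[unfolded relI_def] s3[unfolded relI_def]]])
qed

lemma Id: assumes m: "c - 1 = Suc m" shows "pathel (3, [Lam,Beta,Gamma]) \<in> relI c"
proof -
  have s1: "pathel (3,[Lam,Beta,Gamma]) \<ominus>\<^sub>Q pathel (3, rep Eta Delta m @ [Eta,Delta,Eta,Gamma]) \<in> relI c"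
    using R5[of 3 "[]" "[Gamma]" c] m by (simp add: rep_Suc')
  have s3: "pathel (3, rep Eta Delta m @ [Eta,Delta,Eta,Gamma]) \<in> relI c"
    using Z2[of 3 "rep Eta Delta m @ [Eta]" "[]" c] by simp
  show ?thesis unfolding relI_def by (rule I_chain0[OF s1[unfolded relI_def] s3[unfolded relI_def]])
qed

lemma Ie: assumes m: "c - 1 = Suc m" shows "pathel (1, [Kappa,Lam,Beta]) \<in> relI c"
proof -
  have s1: "pathel (1,[Kappa,Lam,Beta]) \<ominus>\<^sub>Q pathel (1, Kappa#Eta#Delta#rep Eta Delta m @ [Eta]) \<in> relI c"
    using R5[of 1 "[Kappa]" "[]" c] m by (simp add: rep_Suc)
  have s2: "pathel (1, Kappa#Eta#Delta#rep Eta Delta m @ [Eta]) \<ominus>\<^sub>Q pathel (1, Beta#Gamma#Beta#Delta#rep Eta Delta m @ [Eta]) \<in> relI c"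
    using R4[of 1 "[]" "Delta # rep Eta Delta m @ [Eta]" c] by simp
  have s3: "pathel (1, Beta#Gamma#Beta#Delta#rep Eta Delta m @ [Eta]) \<in> relI c"
    using Z1[of 1 "[Beta]" "rep Eta Delta m @ [Eta]" c] by simp
  show ?thesis unfolding relI_def by (rule I_chain0[OF s1[unfolded relI_def] I_chain0[OF s2[unfolded relI_def] s3[unfolded relI_def]]])
qed

lemma If: assumes m: "c - 1 = Suc m" shows "pathel (2, [Gamma,Kappa,Lam]) \<in> relI c"
proof -
  have s1: "pathel (2,[Gamma,Kappa,Lam]) \<ominus>\<^sub>Q pathel (2, rep Delta Eta m @ [Delta,Eta,Delta,Lam]) \<in> relI c"
    using R6[of 2 "[]" "[Lam]" c] m by (simp add: rep_Suc')
  have s2: "pathel (2, rep Delta Eta m @ [Delta,Eta,Delta,Lam]) \<ominus>\<^sub>Q pathel (2, rep Delta Eta m @ [Delta,Eta,Gamma,Beta,Gamma]) \<in> relI c"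
    using R3[of 2 "rep Delta Eta m @ [Delta,Eta]" "[]" c] by simp
  have s3: "pathel (2, rep Delta Eta m @ [Delta,Eta,Gamma,Beta,Gamma]) \<in> relI c"
    using Z2[of 2 "rep Delta Eta m" "[Beta,Gamma]" c] by simp
  show ?thesis unfolding relI_def by (rule I_chain0[OF s1[unfolded relI_def] I_chain0[OF s2[unfolded relI_def] s3[unfolded relI_def]]])
qed

lemma Ig: assumes m: "c - 1 = Suc m" shows "pathel (2, [Delta,Lam,Kappa]) \<in> relI c"
proof -
  have s1: "pathel (2,[Delta,Lam,Kappa]) \<ominus>\<^sub>Q pathel (2,[Gamma,Beta,Gamma,Kappa]) \<in> relI c"
    using R3[of 2 "[]" "[Kappa]" c] by simp
  have s2: "pathel (2,[Gamma,Beta,Gamma,Kappa]) \<ominus>\<^sub>Q pathel (2, Gamma#Beta#Delta#Eta#rep Delta Eta m @ [Delta]) \<in> relI c"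
    using R6[of 2 "[Gamma,Beta]" "[]" c] m by (simp add: rep_Suc)
  have s3: "pathel (2, Gamma#Beta#Delta#Eta#rep Delta Eta m @ [Delta]) \<in> relI c"
    using Z1[of 2 "[]" "Eta # rep Delta Eta m @ [Delta]" c] by simp
  show ?thesis unfolding relI_def by (rule I_chain0[OF s1[unfolded relI_def] I_chain0[OF s2[unfolded relI_def] s3[unfolded relI_def]]])
qed

lemma Ii: "pathel (1, [Beta,Delta,Eta]) \<in> relI c"
proof -
  have s1: "pathel (1,[Beta,Delta,Eta]) \<ominus>\<^sub>Q pathel (1,[Kappa,Lam,Kappa,Eta]) \<in> relI c"
    using R1[of 1 "[]" "[Eta]" c] by simp
  have s3: "pathel (1,[Kappa,Lam,Kappa,Eta]) \<in> relI c"
    using Z3[of 1 "[Kappa]" "[]" c] by simp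
  show ?thesis unfolding relI_def by (rule I_chain0[OF s1[unfolded relI_def] s3[unfolded relI_def]])
qed

lemma Ik: "pathel (1, [Kappa,Eta,Delta]) \<in> relI c"
proof -
  have s1: "pathel (1,[Kappa,Eta,Delta]) \<ominus>\<^sub>Q pathel (1,[Beta,Gamma,Beta,Delta]) \<in> relI c"
    using R4[of 1 "[]" "[Delta]" c] by simp
  have s3: "pathel (1,[Beta,Gamma,Beta,Delta]) \<in> relI c"
    using Z1[of 1 "[Beta]" "[]" c] by simp
  show ?thesis unfolding relI_def by (rule I_chain0[OF s1[unfolded relI_def] s3[unfolded relI_def]])
qed

lemma Il: assumes m: "c - 1 = Suc m" shows "pathel (3, [Eta,Delta,Lam]) \<in> relI c"
proof -
  have s1: "pathel (3,[Eta,Delta,Lam]) \<ominus>\<^sub>Q pathel (3,[Eta,Gamma,Beta,Gamma]) \<in> relI c"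
    using R3[of 3 "[Eta]" "[]" c] by simp
  have s2: "pathel (3,[Eta,Gamma,Beta,Gamma]) \<ominus>\<^sub>Q pathel (3,[Lam,Kappa,Lam,Beta,Gamma]) \<in> relI c"
    using R2[of 3 "[]" "[Beta,Gamma]" c] by simp
  have s3: "pathel (3,[Lam,Kappa,Lam,Beta,Gamma]) \<ominus>\<^sub>Q pathel (3, Lam#Kappa#Eta#Delta#rep Eta Delta m @ [Eta,Gamma]) \<in> relI c"
    using R5[of 3 "[Lam,Kappa]" "[Gamma]" c] m by (simp add: rep_Suc)
  have s4: "pathel (3, Lam#Kappa#Eta#Delta#rep Eta Delta m @ [Eta,Gamma]) \<in> relI c"
    using Z3[of 3 "[]" "Delta # rep Eta Delta m @ [Eta,Gamma]" c] by simp
  show ?thesis unfolding relI_def by (rule I_chain0[OF s1[unfolded relI_def] I_chain0[OF s2[unfolded relI_def] I_chain0[OF s3[unfolded relI_def] s4[unfolded relI_def]]]])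
qed

lemma Ia: "pathel (2, [Gamma,Beta,Delta]) \<in> relI c" using Z1[of 2 "[]" "[]" c] by simp
lemma Ij: "pathel (2, [Delta,Eta,Gamma]) \<in> relI c" using Z2[of 2 "[]" "[]" c] by simp
lemma Ih: "pathel (3, [Lam,Kappa,Eta]) \<in> relI c" using Z3[of 3 "[]" "[]" c] by simp


definition z1 :: "('k::field) kq" where "z1 = pathel (1,[Beta,Gamma]) \<oplus>\<^sub>Q pathel (2,[Gamma,Beta])"
definition z2 :: "('k::field) kq" where "z2 = pathel (1,[Kappa,Lam]) \<oplus>\<^sub>Q pathel (3,[Lam,Kappa])"
definition z3 :: "('k::field) kq" where "z3 = pathel (2,[Delta,Eta]) \<oplus>\<^sub>Q pathel (3,[Eta,Delta])"

lemma j_cases: "j \<in> {1,2,3} \<Longrightarrow> (j = 1 \<Longrightarrow> P) \<Longrightarrow> (j = 2 \<Longrightarrow> P) \<Longrightarrow> (j = 3 \<Longrightarrow> P) \<Longrightarrow> P"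
  by auto

lemmas Ifacts = Ia Ib Ic Id Ie If Ig Ih Ii Ij Ik Il

lemma central_z1: assumes m: "c - 1 = Suc m" shows "central_mod (relI c) z1"
  unfolding relI_def
proof (rule central_from_gens)
  show "z1 \<in> kQ" unfolding z1_def by (intro add_kQ pathel_kQ) simp_all
next
  fix j :: nat assume "j \<in> {1,2,3}"
  then show "z1 \<otimes>\<^sub>Q idem j \<ominus>\<^sub>Q idem j \<otimes>\<^sub>Q z1 \<in> gen_ideal (relations c)"
    by (rule j_cases) (simp_all add: z1_def mult_add_left mult_add_right idem_def gen_ideal.zero)
next
  fix a
  show "z1 \<otimes>\<^sub>Q pathel (src a, [a]) \<ominus>\<^sub>Q pathel (src a, [a]) \<otimes>\<^sub>Q z1 \<in> gen_ideal (relations c)"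
    by (cases a) (simp_all add: z1_def mult_add_left mult_add_right gen_ideal.zero I_neg
        Ia[unfolded relI_def One_nat_def] Ib[OF m, unfolded relI_def One_nat_def] Ic[OF m, unfolded relI_def One_nat_def] Id[OF m, unfolded relI_def One_nat_def] Ie[OF m, unfolded relI_def One_nat_def] If[OF m, unfolded relI_def One_nat_def] Ig[OF m, unfolded relI_def One_nat_def] Ih[unfolded relI_def One_nat_def] Ii[unfolded relI_def One_nat_def] Ij[unfolded relI_def One_nat_def] Ik[unfolded relI_def One_nat_def] Il[OF m, unfolded relI_def One_nat_def])
qed

lemma central_z2: assumes m: "c - 1 = Suc m" shows "central_mod (relI c) z2"
  unfolding relI_def
proof (rule central_from_gens)
  show "z2 \<in> kQ" unfolding z2_def by (intro add_kQ pathel_kQ) simp_all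
next
  fix j :: nat assume "j \<in> {1,2,3}"
  then show "z2 \<otimes>\<^sub>Q idem j \<ominus>\<^sub>Q idem j \<otimes>\<^sub>Q z2 \<in> gen_ideal (relations c)"
    by (rule j_cases) (simp_all add: z2_def mult_add_left mult_add_right idem_def gen_ideal.zero)
next
  fix a
  show "z2 \<otimes>\<^sub>Q pathel (src a, [a]) \<ominus>\<^sub>Q pathel (src a, [a]) \<otimes>\<^sub>Q z2 \<in> gen_ideal (relations c)"
    by (cases a) (simp_all add: z2_def mult_add_left mult_add_right gen_ideal.zero I_neg
        Ia[unfolded relI_def One_nat_def] Ib[OF m, unfolded relI_def One_nat_def] Ic[OF m, unfolded relI_def One_nat_def] Id[OF m, unfolded relI_def One_nat_def] Ie[OF m, unfolded relI_def One_nat_def] If[OF m, unfolded relI_def One_nat_def] Ig[OF m, unfolded relI_def One_nat_def] Ih[unfolded relI_def One_nat_def] Ii[unfolded relI_def One_nat_def] Ij[unfolded relI_def One_nat_def] Ik[unfolded relI_def One_nat_def] Il[OF m, unfolded relI_def One_nat_def])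
qed

lemma central_z3: assumes m: "c - 1 = Suc m" shows "central_mod (relI c) z3"
  unfolding relI_def
proof (rule central_from_gens)
  show "z3 \<in> kQ" unfolding z3_def by (intro add_kQ pathel_kQ) simp_all
next
  fix j :: nat assume "j \<in> {1,2,3}"
  then show "z3 \<otimes>\<^sub>Q idem j \<ominus>\<^sub>Q idem j \<otimes>\<^sub>Q z3 \<in> gen_ideal (relations c)"
    by (rule j_cases) (simp_all add: z3_def mult_add_left mult_add_right idem_def gen_ideal.zero)
next
  fix a
  show "z3 \<otimes>\<^sub>Q pathel (src a, [a]) \<ominus>\<^sub>Q pathel (src a, [a]) \<otimes>\<^sub>Q z3 \<in> gen_ideal (relations c)"
    by (cases a) (simp_all add: z3_def mult_add_left mult_add_right gen_ideal.zero I_neg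
        Ia[unfolded relI_def One_nat_def] Ib[OF m, unfolded relI_def One_nat_def] Ic[OF m, unfolded relI_def One_nat_def] Id[OF m, unfolded relI_def One_nat_def] Ie[OF m, unfolded relI_def One_nat_def] If[OF m, unfolded relI_def One_nat_def] Ig[OF m, unfolded relI_def One_nat_def] Ih[unfolded relI_def One_nat_def] Ii[unfolded relI_def One_nat_def] Ij[unfolded relI_def One_nat_def] Ik[unfolded relI_def One_nat_def] Il[OF m, unfolded relI_def One_nat_def])
qed


lemma T_concat: "pathel (i, p) \<in> Tset R i \<Longrightarrow> pathel (i, q) \<in> Tset R i \<Longrightarrow> endv i p = i \<Longrightarrow> i \<in> {1,2,3}
  \<Longrightarrow> pathel (i, p @ q) \<in> Tset R i"
proof -
  assume a1: "pathel (i, p) \<in> Tset R i" and a2: "pathel (i, q) \<in> Tset R i" and e: "endv i p = i" and i: "i \<in> {1,2,3}"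
  have "pathel (i, p) \<otimes>\<^sub>Q pathel (i, q) \<in> Tset R i" by (rule T_mult[OF i a1 a2])
  then show ?thesis using e by simp
qed

lemma step_rewrite:
  assumes "valid_path i xs" "pathel (i, xs) \<ominus>\<^sub>Q pathel (i, p @ q) \<in> gen_ideal R"
    "pathel (i, p) \<in> Tset R i" "pathel (i, q) \<in> Tset R i" "endv i p = i" "i \<in> {1,2,3}"
  shows "pathel (i, xs) \<in> Tset R i"
  by (rule T_cong[OF pathel_kQ[OF assms(1)] assms(2) T_concat[OF assms(3-6)]])

context fixes c m :: nat assumes m: "c - 1 = Suc m"
begin

lemma TBG: "pathel (1,[Beta,Gamma]) \<in> Tset (relations c) 1"
  by (rule T_base[OF central_z1[OF m, unfolded relI_def]]) (simp_all add: pathel_kQ z1_def mult_add_left mult_add_right idem_def)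
lemma TGB: "pathel (2,[Gamma,Beta]) \<in> Tset (relations c) 2"
  by (rule T_base[OF central_z1[OF m, unfolded relI_def]]) (simp_all add: pathel_kQ z1_def mult_add_left mult_add_right idem_def)
lemma TKL: "pathel (1,[Kappa,Lam]) \<in> Tset (relations c) 1"
  by (rule T_base[OF central_z2[OF m, unfolded relI_def]]) (simp_all add: pathel_kQ z2_def mult_add_left mult_add_right idem_def)
lemma TLK: "pathel (3,[Lam,Kappa]) \<in> Tset (relations c) 3"
  by (rule T_base[OF central_z2[OF m, unfolded relI_def]]) (simp_all add: pathel_kQ z2_def mult_add_left mult_add_right idem_def)
lemma TDE: "pathel (2,[Delta,Eta]) \<in> Tset (relations c) 2"
  by (rule T_base[OF central_z3[OF m, unfolded relI_def]]) (simp_all add: pathel_kQ z3_def mult_add_left mult_add_right idem_def)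
lemma TED: "pathel (3,[Eta,Delta]) \<in> Tset (relations c) 3"
  by (rule T_base[OF central_z3[OF m, unfolded relI_def]]) (simp_all add: pathel_kQ z3_def mult_add_left mult_add_right idem_def)

lemma TrepDE: "pathel (2, rep Delta Eta k) \<in> Tset (relations c) 2"
proof (induction k)
  case 0 then show ?case using T_idem[of 2] by (simp add: idem_def)
next
  case (Suc k)
  then show ?case using T_concat[OF TDE Suc] by (simp add: rep_Suc)
qed

lemma TrepED: "pathel (3, rep Eta Delta k) \<in> Tset (relations c) 3"
proof (induction k)
  case 0 then show ?case using T_idem[of 3] by (simp add: idem_def)
next
  case (Suc k)
  then show ?case using T_concat[OF TED Suc] by (simp add: rep_Suc)
qed

lemma closed_path: "valid_path i xs \<Longrightarrow> endv i xs = i \<Longrightarrow> (pathel (i, xs) :: 'k::field kq) \<in> Tset (relations c) i"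
proof (induction "length xs" arbitrary: i xs rule: less_induct)
  case less
  have i3: "i \<in> {1,2,3}" using less.prems valid_path_set by blast
  show ?case
  proof (cases xs)
    case Nil then show ?thesis using T_idem[OF i3] by (simp add: idem_def)
  next
    case (Cons a ys) note xa = this
    show ?thesis
    proof (cases ys)
      case Nil then show ?thesis using less.prems xa by (cases a) auto
    next
      case (Cons b rest)
      have xs: "xs = a # b # rest" using xa Cons by simp
      have IH: "\<And>j zs. length zs < length xs \<Longrightarrow> valid_path j zs \<Longrightarrow> endv j zs = j \<Longrightarrow> (pathel (j, zs) :: 'k kq) \<in> Tset (relations c) j"
        using less.hyps by metis
      have lt1: "length rest < length xs" "Suc (length rest) < length xs" using xs by auto
      have v: "valid_path i (a#b#rest)" "endv i (a#b#rest) = i" using less.prems xs by auto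
      have c_Beta_Gamma: "a = Beta \<Longrightarrow> b = Gamma \<Longrightarrow> (pathel (i, a#b#rest) :: 'k kq) \<in> Tset (relations c) i"
      proof -
        assume ab: "a = Beta" "b = Gamma"
        have i: "i = 1" and vr: "valid_path 1 rest" "endv 1 rest = 1" using v ab by auto
        have "(pathel (1, [Beta,Gamma] @ rest) :: 'k kq) \<in> Tset (relations c) 1"
          by (rule T_concat[OF TBG IH[OF lt1(1) vr]]) simp_all
        then show ?thesis using i ab by simp
      qed
      have c_Kappa_Lam: "a = Kappa \<Longrightarrow> b = Lam \<Longrightarrow> (pathel (i, a#b#rest) :: 'k kq) \<in> Tset (relations c) i"
      proof -
        assume ab: "a = Kappa" "b = Lam"
        have i: "i = 1" and vr: "valid_path 1 rest" "endv 1 rest = 1" using v ab by auto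
        have "(pathel (1, [Kappa,Lam] @ rest) :: 'k kq) \<in> Tset (relations c) 1"
          by (rule T_concat[OF TKL IH[OF lt1(1) vr]]) simp_all
        then show ?thesis using i ab by simp
      qed
      have c_Gamma_Beta: "a = Gamma \<Longrightarrow> b = Beta \<Longrightarrow> (pathel (i, a#b#rest) :: 'k kq) \<in> Tset (relations c) i"
      proof -
        assume ab: "a = Gamma" "b = Beta"
        have i: "i = 2" and vr: "valid_path 2 rest" "endv 2 rest = 2" using v ab by auto
        have "(pathel (2, [Gamma,Beta] @ rest) :: 'k kq) \<in> Tset (relations c) 2"
          by (rule T_concat[OF TGB IH[OF lt1(1) vr]]) simp_all
        then show ?thesis using i ab by simp
      qed
      have c_Delta_Eta: "a = Delta \<Longrightarrow> b = Eta \<Longrightarrow> (pathel (i, a#b#rest) :: 'k kq) \<in> Tset (relations c) i"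
      proof -
        assume ab: "a = Delta" "b = Eta"
        have i: "i = 2" and vr: "valid_path 2 rest" "endv 2 rest = 2" using v ab by auto
        have "(pathel (2, [Delta,Eta] @ rest) :: 'k kq) \<in> Tset (relations c) 2"
          by (rule T_concat[OF TDE IH[OF lt1(1) vr]]) simp_all
        then show ?thesis using i ab by simp
      qed
      have c_Eta_Delta: "a = Eta \<Longrightarrow> b = Delta \<Longrightarrow> (pathel (i, a#b#rest) :: 'k kq) \<in> Tset (relations c) i"
      proof -
        assume ab: "a = Eta" "b = Delta"
        have i: "i = 3" and vr: "valid_path 3 rest" "endv 3 rest = 3" using v ab by auto
        have "(pathel (3, [Eta,Delta] @ rest) :: 'k kq) \<in> Tset (relations c) 3"
          by (rule T_concat[OF TED IH[OF lt1(1) vr]]) simp_all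
        then show ?thesis using i ab by simp
      qed
      have c_Lam_Kappa: "a = Lam \<Longrightarrow> b = Kappa \<Longrightarrow> (pathel (i, a#b#rest) :: 'k kq) \<in> Tset (relations c) i"
      proof -
        assume ab: "a = Lam" "b = Kappa"
        have i: "i = 3" and vr: "valid_path 3 rest" "endv 3 rest = 3" using v ab by auto
        have "(pathel (3, [Lam,Kappa] @ rest) :: 'k kq) \<in> Tset (relations c) 3"
          by (rule T_concat[OF TLK IH[OF lt1(1) vr]]) simp_all
        then show ?thesis using i ab by simp
      qed
      have c_Beta_Delta: "a = Beta \<Longrightarrow> b = Delta \<Longrightarrow> (pathel (i, a#b#rest) :: 'k kq) \<in> Tset (relations c) i"
      proof -
        assume ab: "a = Beta" "b = Delta"
        have i: "i = 1" and vr: "valid_path 3 rest" "endv 3 rest = 1" using v ab by auto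
        have "(pathel (1, Beta#Delta#rest) :: 'k kq) \<in> Tset (relations c) 1"
        proof (rule step_rewrite[where p = "[Kappa,Lam]" and q = "Kappa # rest"])
          show "valid_path 1 (Beta#Delta#rest)" using vr by simp
          show "(pathel (1, Beta#Delta#rest) :: 'k kq) \<ominus>\<^sub>Q pathel (1, ([Kappa,Lam]) @ (Kappa # rest)) \<in> gen_ideal (relations c)"
            using R1[of 1 "[]" rest c] vr by (simp add: relI_def)
          show "(pathel (1, [Kappa,Lam]) :: 'k kq) \<in> Tset (relations c) 1" by (rule TKL)
          show "(pathel (1, Kappa # rest) :: 'k kq) \<in> Tset (relations c) 1" by (rule IH) (use lt1 vr in simp_all)
          show "endv 1 ([Kappa,Lam]) = 1" by simp
          show "(1::nat) \<in> {1,2,3}" by simp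
        qed
        then show ?thesis using i ab by simp
      qed
      have c_Kappa_Eta: "a = Kappa \<Longrightarrow> b = Eta \<Longrightarrow> (pathel (i, a#b#rest) :: 'k kq) \<in> Tset (relations c) i"
      proof -
        assume ab: "a = Kappa" "b = Eta"
        have i: "i = 1" and vr: "valid_path 2 rest" "endv 2 rest = 1" using v ab by auto
        have "(pathel (1, Kappa#Eta#rest) :: 'k kq) \<in> Tset (relations c) 1"
        proof (rule step_rewrite[where p = "[Beta,Gamma]" and q = "Beta # rest"])
          show "valid_path 1 (Kappa#Eta#rest)" using vr by simp
          show "(pathel (1, Kappa#Eta#rest) :: 'k kq) \<ominus>\<^sub>Q pathel (1, ([Beta,Gamma]) @ (Beta # rest)) \<in> gen_ideal (relations c)"
            using R4[of 1 "[]" rest c] vr by (simp add: relI_def)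
          show "(pathel (1, [Beta,Gamma]) :: 'k kq) \<in> Tset (relations c) 1" by (rule TBG)
          show "(pathel (1, Beta # rest) :: 'k kq) \<in> Tset (relations c) 1" by (rule IH) (use lt1 vr in simp_all)
          show "endv 1 ([Beta,Gamma]) = 1" by simp
          show "(1::nat) \<in> {1,2,3}" by simp
        qed
        then show ?thesis using i ab by simp
      qed
      have c_Gamma_Kappa: "a = Gamma \<Longrightarrow> b = Kappa \<Longrightarrow> (pathel (i, a#b#rest) :: 'k kq) \<in> Tset (relations c) i"
      proof -
        assume ab: "a = Gamma" "b = Kappa"
        have i: "i = 2" and vr: "valid_path 3 rest" "endv 3 rest = 2" using v ab by auto
        have "(pathel (2, Gamma#Kappa#rest) :: 'k kq) \<in> Tset (relations c) 2"
        proof (rule step_rewrite[where p = "rep Delta Eta (c - 1)" and q = "Delta # rest"])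
          show "valid_path 2 (Gamma#Kappa#rest)" using vr by simp
          show "(pathel (2, Gamma#Kappa#rest) :: 'k kq) \<ominus>\<^sub>Q pathel (2, (rep Delta Eta (c - 1)) @ (Delta # rest)) \<in> gen_ideal (relations c)"
            using R6[of 2 "[]" rest c] vr by (simp add: relI_def)
          show "(pathel (2, rep Delta Eta (c - 1)) :: 'k kq) \<in> Tset (relations c) 2" by (rule TrepDE)
          show "(pathel (2, Delta # rest) :: 'k kq) \<in> Tset (relations c) 2" by (rule IH) (use lt1 vr in simp_all)
          show "endv 2 (rep Delta Eta (c - 1)) = 2" by simp
          show "(2::nat) \<in> {1,2,3}" by simp
        qed
        then show ?thesis using i ab by simp
      qed
      have c_Delta_Lam: "a = Delta \<Longrightarrow> b = Lam \<Longrightarrow> (pathel (i, a#b#rest) :: 'k kq) \<in> Tset (relations c) i"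
      proof -
        assume ab: "a = Delta" "b = Lam"
        have i: "i = 2" and vr: "valid_path 1 rest" "endv 1 rest = 2" using v ab by auto
        have "(pathel (2, Delta#Lam#rest) :: 'k kq) \<in> Tset (relations c) 2"
        proof (rule step_rewrite[where p = "[Gamma,Beta]" and q = "Gamma # rest"])
          show "valid_path 2 (Delta#Lam#rest)" using vr by simp
          show "(pathel (2, Delta#Lam#rest) :: 'k kq) \<ominus>\<^sub>Q pathel (2, ([Gamma,Beta]) @ (Gamma # rest)) \<in> gen_ideal (relations c)"
            using R3[of 2 "[]" rest c] vr by (simp add: relI_def)
          show "(pathel (2, [Gamma,Beta]) :: 'k kq) \<in> Tset (relations c) 2" by (rule TGB)
          show "(pathel (2, Gamma # rest) :: 'k kq) \<in> Tset (relations c) 2" by (rule IH) (use lt1 vr in simp_all)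
          show "endv 2 ([Gamma,Beta]) = 2" by simp
          show "(2::nat) \<in> {1,2,3}" by simp
        qed
        then show ?thesis using i ab by simp
      qed
      have c_Eta_Gamma: "a = Eta \<Longrightarrow> b = Gamma \<Longrightarrow> (pathel (i, a#b#rest) :: 'k kq) \<in> Tset (relations c) i"
      proof -
        assume ab: "a = Eta" "b = Gamma"
        have i: "i = 3" and vr: "valid_path 1 rest" "endv 1 rest = 3" using v ab by auto
        have "(pathel (3, Eta#Gamma#rest) :: 'k kq) \<in> Tset (relations c) 3"
        proof (rule step_rewrite[where p = "[Lam,Kappa]" and q = "Lam # rest"])
          show "valid_path 3 (Eta#Gamma#rest)" using vr by simp
          show "(pathel (3, Eta#Gamma#rest) :: 'k kq) \<ominus>\<^sub>Q pathel (3, ([Lam,Kappa]) @ (Lam # rest)) \<in> gen_ideal (relations c)"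
            using R2[of 3 "[]" rest c] vr by (simp add: relI_def)
          show "(pathel (3, [Lam,Kappa]) :: 'k kq) \<in> Tset (relations c) 3" by (rule TLK)
          show "(pathel (3, Lam # rest) :: 'k kq) \<in> Tset (relations c) 3" by (rule IH) (use lt1 vr in simp_all)
          show "endv 3 ([Lam,Kappa]) = 3" by simp
          show "(3::nat) \<in> {1,2,3}" by simp
        qed
        then show ?thesis using i ab by simp
      qed
      have c_Lam_Beta: "a = Lam \<Longrightarrow> b = Beta \<Longrightarrow> (pathel (i, a#b#rest) :: 'k kq) \<in> Tset (relations c) i"
      proof -
        assume ab: "a = Lam" "b = Beta"
        have i: "i = 3" and vr: "valid_path 2 rest" "endv 2 rest = 3" using v ab by auto
        have "(pathel (3, Lam#Beta#rest) :: 'k kq) \<in> Tset (relations c) 3"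
        proof (rule step_rewrite[where p = "rep Eta Delta (c - 1)" and q = "Eta # rest"])
          show "valid_path 3 (Lam#Beta#rest)" using vr by simp
          show "(pathel (3, Lam#Beta#rest) :: 'k kq) \<ominus>\<^sub>Q pathel (3, (rep Eta Delta (c - 1)) @ (Eta # rest)) \<in> gen_ideal (relations c)"
            using R5[of 3 "[]" rest c] vr by (simp add: relI_def)
          show "(pathel (3, rep Eta Delta (c - 1)) :: 'k kq) \<in> Tset (relations c) 3" by (rule TrepED)
          show "(pathel (3, Eta # rest) :: 'k kq) \<in> Tset (relations c) 3" by (rule IH) (use lt1 vr in simp_all)
          show "endv 3 (rep Eta Delta (c - 1)) = 3" by simp
          show "(3::nat) \<in> {1,2,3}" by simp
        qed
        then show ?thesis using i ab by simp
      qed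
      show ?thesis unfolding xs using v c_Beta_Gamma c_Kappa_Lam c_Gamma_Beta c_Delta_Eta c_Eta_Delta c_Lam_Kappa c_Beta_Delta c_Kappa_Eta c_Gamma_Kappa c_Delta_Lam c_Eta_Gamma c_Lam_Beta by (cases a; cases b) auto
    qed
  qed
qed

end


lemma corner_in_T:
  fixes c m :: nat assumes m: "c - 1 = Suc m" and i: "i \<in> {1,2,3}"
  shows "a \<in> kQ \<Longrightarrow> idem i \<otimes>\<^sub>Q (a :: 'k::field kq) \<otimes>\<^sub>Q idem i \<in> Tset (relations c) i"
proof (induction rule: kQ_induct')
  case zero then show ?case by (simp add: T_zero)
next
  case (step y d j xs)
  have eq: "idem i \<otimes>\<^sub>Q (y \<oplus>\<^sub>Q smultQ d (pathel (j, xs))) \<otimes>\<^sub>Q idem i =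
     (idem i \<otimes>\<^sub>Q y \<otimes>\<^sub>Q idem i) \<oplus>\<^sub>Q smultQ d (idem i \<otimes>\<^sub>Q pathel (j, xs) \<otimes>\<^sub>Q idem i)"
    by (simp only: mult_add_left mult_add_right mult_smult_left mult_smult_right)
  have "idem i \<otimes>\<^sub>Q (pathel (j, xs) :: 'k kq) \<otimes>\<^sub>Q idem i \<in> Tset (relations c) i"
  proof (cases "j = i \<and> endv i xs = i")
    case True
    then have "idem i \<otimes>\<^sub>Q pathel (j, xs) \<otimes>\<^sub>Q idem i = (pathel (i, xs) :: 'k kq)" by (simp add: idem_def)
    moreover have "(pathel (i, xs) :: 'k kq) \<in> Tset (relations c) i"
      using closed_path[OF m] step.hyps True by auto
    ultimately show ?thesis by (simp only:)
  next
    case False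
    then have "idem i \<otimes>\<^sub>Q pathel (j, xs) \<otimes>\<^sub>Q idem i = (kq_zero :: 'k kq)" by (auto simp: idem_def)
    then show ?thesis by (simp only: T_zero)
  qed
  then show ?case unfolding eq by (intro T_add T_smult step.IH)
qed

theorem proposition2p4:
  fixes n :: nat and c :: nat and i :: nat
  assumes "CHAR('k::alg_closed_field) = 2"
    and "n \<ge> 3" and "c = 2 ^ (n - 2)"
    and "i \<in> {1, 2, 3}"
  shows "corner_pre (relI c :: 'k kq set) i = center_corner_pre (relI c) i"
proof -
  have "c \<ge> 2"
  proof -
    have "(2::nat) ^ 1 \<le> 2 ^ (n - 2)" using assms(2) by (intro power_increasing) auto
    then show ?thesis using assms(3) by simp
  qed
  then have "c - 1 = Suc (c - 2)" by arith
  then obtain m where m: "c - 1 = Suc m" by blast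
  show ?thesis
  proof
    show "corner_pre (relI c :: 'k kq set) i \<subseteq> center_corner_pre (relI c) i"
    proof
      fix x :: "'k kq" assume "x \<in> corner_pre (relI c) i"
      then obtain a where x: "x \<in> kQ" and a: "a \<in> kQ" and d: "x \<ominus>\<^sub>Q (idem i \<otimes>\<^sub>Q a \<otimes>\<^sub>Q idem i) \<in> relI c"
        unfolding corner_pre_def by blast
      have "idem i \<otimes>\<^sub>Q a \<otimes>\<^sub>Q idem i \<in> Tset (relations c) i" by (rule corner_in_T[OF m assms(4) a])
      then obtain z where z: "central_mod (gen_ideal (relations c)) z"
        "(idem i \<otimes>\<^sub>Q a \<otimes>\<^sub>Q idem i) \<ominus>\<^sub>Q (idem i \<otimes>\<^sub>Q z \<otimes>\<^sub>Q idem i) \<in> gen_ideal (relations c)"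
        unfolding Tset_def by blast
      have "x \<ominus>\<^sub>Q (idem i \<otimes>\<^sub>Q z \<otimes>\<^sub>Q idem i) \<in> gen_ideal (relations c)"
        using I_chain[OF d[unfolded relI_def] z(2)] .
      then show "x \<in> center_corner_pre (relI c) i"
        unfolding center_corner_pre_def relI_def using x z(1) by blast
    qed
  next
    show "center_corner_pre (relI c :: 'k kq set) i \<subseteq> corner_pre (relI c) i"
      unfolding center_corner_pre_def corner_pre_def central_mod_def by blast
  qed
qed

end
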